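(* For every $\epsilon>0$ there is an instance with uniform weights on which, setting $$A=\mathrm{opt}_M\text{-}\mathrm{MAX}=\mathrm{opt}_M\text{-}\mathrm{SUM}=\mathrm{opt}_D\text{-}\mathrm{WMP}=\mathrm{opt}_D\text{-}\mathrm{EMP}=\mathrm{opt}_D\text{-}\mathrm{MWP}$$ and $$B=\mathrm{opt}_D\text{-}\mathrm{WEP}=\mathrm{opt}_D\text{-}\mathrm{EEP}=\mathrm{opt}_D\text{-}\mathrm{MEP}=\mathrm{opt}\text{-}\mathrm{MAX}=\mathrm{opt}\text{-}\mathrm{SUM}$$ (all the displayed equalities holding), we have $A\ge(2-\epsilon)B$.
   Context: An instance consists of a finite set $E$ of $n$ elements and $m$ tests, test $i$ being a subset $s_i\subseteq E$; uniform weights mean $p_e=1/n$ for SUM objectives (EMP, MEP, EEP) and $p_e=1$ for MAX objectives (WMP, MWP, WEP). A schedule is an infinite test sequence; deterministic schedules are fixed sequences; stochastic schedules choose $\sigma_t$ randomly depending on the past; memoryless schedules draw each $\sigma_t$ i.i.d. from a distribution on tests. Detection time $T(e,t)=\mathbb{E}[1+\min\{h\ge0:e\in s_{\sigma_{t+h}}\}]$, $M_t[e]=\sup_tT(e,t)$, $E_t[e]=\lim_H\frac1H\sum_{t\le H}T(e,t)$; valid schedules have $M_t[e]<\infty$ and $E_t[e]$ existing for all $e$, and convergent test frequencies. $\mathrm{EMP}=\sum_ep_eM_t[e]$, $\mathrm{MEP}=\sup_t\sum_ep_eT(e,t)$, $\mathrm{EEP}=\sum_ep_eE_t[e]$, $\mathrm{WMP}=\sup_{e,t}p_eT(e,t)$,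 $\mathrm{WEP}=\max_ep_eE_t[e]$, $\mathrm{MWP}=\lim_H\frac1H\sum_{t\le H}\max_ep_eT(e,t)$. $\mathrm{opt}_D\text{-}X$: infimum of $X$ over valid deterministic schedules; $\mathrm{opt}\text{-}\mathrm{SUM}$, $\mathrm{opt}\text{-}\mathrm{MAX}$: infima of EEP, WEP over valid stochastic schedules; $\mathrm{opt}_M\text{-}\mathrm{SUM}$, $\mathrm{opt}_M\text{-}\mathrm{MAX}$: infima of EEP, WEP over memoryless schedules. *)

theory Defs
  imports "HOL-Probability.Probability"
begin

definition is_instance :: "nat \<Rightarrow> nat \<Rightarrow> (nat \<Rightarrow> nat set) \<Rightarrow> bool" where
  "is_instance n m s \<longleftrightarrow> n \<ge> 1 \<and> (\<forall>i<m. s i \<subseteq> {..<n}) \<and> (\<forall>e<n. \<exists>i<m. e \<in> s i)"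

text \<open>A test sequence is a function nat => nat (time t |-> index of test run at time t).
  hit s e sigma t = 1 + min{h >= 0. e in s (sigma (t+h))}, infinite if never.\<close>

definition hit :: "(nat \<Rightarrow> nat set) \<Rightarrow> nat \<Rightarrow> (nat \<Rightarrow> nat) \<Rightarrow> nat \<Rightarrow> ennreal" where
  "hit s e \<sigma> t = (if \<exists>h. e \<in> s (\<sigma> (t + h))
      then of_nat (1 + (LEAST h. e \<in> s (\<sigma> (t + h)))) else \<infinity>)"

definition seq_space :: "(nat \<Rightarrow> nat) measure" where
  "seq_space = PiM UNIV (\<lambda>_. count_space UNIV)"

definition det_sched :: "nat \<Rightarrow> (nat \<Rightarrow> nat) \<Rightarrow> bool" where
  "det_sched m \<sigma> \<longleftrightarrow> (\<forall>t. \<sigma> t < m)"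

text \<open>Stochastic schedules: arbitrary probability laws of the random test sequence
  (sigma_t may depend on the past in any way).\<close>
definition stoch_sched :: "nat \<Rightarrow> (nat \<Rightarrow> nat) measure \<Rightarrow> bool" where
  "stoch_sched m M \<longleftrightarrow> prob_space M \<and> sets M = sets seq_space \<and> (AE \<sigma> in M. \<forall>t. \<sigma> t < m)"

definition memoryless :: "nat pmf \<Rightarrow> (nat \<Rightarrow> nat) measure" where
  "memoryless q = PiM UNIV (\<lambda>_. measure_pmf q)"

definition test_dist :: "nat \<Rightarrow> nat pmf \<Rightarrow> bool" where
  "test_dist m q \<longleftrightarrow> set_pmf q \<subseteq> {..<m}"

definition T_det :: "(nat \<Rightarrow> nat set) \<Rightarrow> (nat \<Rightarrow> nat) \<Rightarrow> nat \<Rightarrow> nat \<Rightarrow> ennreal" where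
  "T_det s \<sigma> e t = hit s e \<sigma> t"

definition freq_det :: "(nat \<Rightarrow> nat) \<Rightarrow> nat \<Rightarrow> nat \<Rightarrow> ennreal" where
  "freq_det \<sigma> i t = (if \<sigma> t = i then 1 else 0)"

definition T_st :: "(nat \<Rightarrow> nat set) \<Rightarrow> (nat \<Rightarrow> nat) measure \<Rightarrow> nat \<Rightarrow> nat \<Rightarrow> ennreal" where
  "T_st s M e t = (\<integral>\<^sup>+ \<sigma>. hit s e \<sigma> t \<partial>M)"

definition freq_st :: "(nat \<Rightarrow> nat) measure \<Rightarrow> nat \<Rightarrow> nat \<Rightarrow> ennreal" where
  "freq_st M i t = emeasure M {\<sigma> \<in> space M. \<sigma> t = i}"

definition cesaro :: "(nat \<Rightarrow> ennreal) \<Rightarrow> nat \<Rightarrow> ennreal" where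
  "cesaro f H = (\<Sum>t<H. f t) / of_nat H"

definition Mt :: "(nat \<Rightarrow> nat \<Rightarrow> ennreal) \<Rightarrow> nat \<Rightarrow> ennreal" where
  "Mt T e = (SUP t. T e t)"

definition Et :: "(nat \<Rightarrow> nat \<Rightarrow> ennreal) \<Rightarrow> nat \<Rightarrow> ennreal" where
  "Et T e = lim (cesaro (\<lambda>t. T e t))"

definition valid :: "nat \<Rightarrow> nat \<Rightarrow> (nat \<Rightarrow> nat \<Rightarrow> ennreal) \<Rightarrow> (nat \<Rightarrow> nat \<Rightarrow> ennreal) \<Rightarrow> bool" where
  "valid n m T F \<longleftrightarrow> (\<forall>e<n. Mt T e < \<infinity>) \<and> (\<forall>e<n. convergent (cesaro (\<lambda>t. T e t)))
      \<and> (\<forall>i<m. convergent (cesaro (\<lambda>t. F i t)))"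

definition EMP :: "nat \<Rightarrow> (nat \<Rightarrow> ennreal) \<Rightarrow> (nat \<Rightarrow> nat \<Rightarrow> ennreal) \<Rightarrow> ennreal" where
  "EMP n p T = (\<Sum>e<n. p e * Mt T e)"

definition MEP :: "nat \<Rightarrow> (nat \<Rightarrow> ennreal) \<Rightarrow> (nat \<Rightarrow> nat \<Rightarrow> ennreal) \<Rightarrow> ennreal" where
  "MEP n p T = (SUP t. \<Sum>e<n. p e * T e t)"

definition EEP :: "nat \<Rightarrow> (nat \<Rightarrow> ennreal) \<Rightarrow> (nat \<Rightarrow> nat \<Rightarrow> ennreal) \<Rightarrow> ennreal" where
  "EEP n p T = (\<Sum>e<n. p e * Et T e)"

definition WMP :: "nat \<Rightarrow> (nat \<Rightarrow> ennreal) \<Rightarrow> (nat \<Rightarrow> nat \<Rightarrow> ennreal) \<Rightarrow> ennreal" where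
  "WMP n p T = (SUP e\<in>{..<n}. SUP t. p e * T e t)"

definition WEP :: "nat \<Rightarrow> (nat \<Rightarrow> ennreal) \<Rightarrow> (nat \<Rightarrow> nat \<Rightarrow> ennreal) \<Rightarrow> ennreal" where
  "WEP n p T = (SUP e\<in>{..<n}. p e * Et T e)"

definition MWP_avg :: "nat \<Rightarrow> (nat \<Rightarrow> ennreal) \<Rightarrow> (nat \<Rightarrow> nat \<Rightarrow> ennreal) \<Rightarrow> nat \<Rightarrow> ennreal" where
  "MWP_avg n p T = cesaro (\<lambda>t. SUP e\<in>{..<n}. p e * T e t)"

definition MWP :: "nat \<Rightarrow> (nat \<Rightarrow> ennreal) \<Rightarrow> (nat \<Rightarrow> nat \<Rightarrow> ennreal) \<Rightarrow> ennreal" where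
  "MWP n p T = lim (MWP_avg n p T)"

definition sum_w :: "nat \<Rightarrow> nat \<Rightarrow> ennreal" where
  "sum_w n e = ennreal (1 / real n)"

definition max_w :: "nat \<Rightarrow> ennreal" where
  "max_w e = 1"

definition valid_det :: "nat \<Rightarrow> nat \<Rightarrow> (nat \<Rightarrow> nat set) \<Rightarrow> (nat \<Rightarrow> nat) \<Rightarrow> bool" where
  "valid_det n m s \<sigma> \<longleftrightarrow> det_sched m \<sigma> \<and> valid n m (T_det s \<sigma>) (freq_det \<sigma>)"

definition valid_st :: "nat \<Rightarrow> nat \<Rightarrow> (nat \<Rightarrow> nat set) \<Rightarrow> (nat \<Rightarrow> nat) measure \<Rightarrow> bool" where
  "valid_st n m s M \<longleftrightarrow> stoch_sched m M \<and> valid n m (T_st s M) (freq_st M)"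

definition optD_EMP :: "nat \<Rightarrow> nat \<Rightarrow> (nat \<Rightarrow> nat set) \<Rightarrow> ennreal" where
  "optD_EMP n m s = (INF \<sigma>\<in>{\<sigma>. valid_det n m s \<sigma>}. EMP n (sum_w n) (T_det s \<sigma>))"

definition optD_MEP :: "nat \<Rightarrow> nat \<Rightarrow> (nat \<Rightarrow> nat set) \<Rightarrow> ennreal" where
  "optD_MEP n m s = (INF \<sigma>\<in>{\<sigma>. valid_det n m s \<sigma>}. MEP n (sum_w n) (T_det s \<sigma>))"

definition optD_EEP :: "nat \<Rightarrow> nat \<Rightarrow> (nat \<Rightarrow> nat set) \<Rightarrow> ennreal" where
  "optD_EEP n m s = (INF \<sigma>\<in>{\<sigma>. valid_det n m s \<sigma>}. EEP n (sum_w n) (T_det s \<sigma>))"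

definition optD_WMP :: "nat \<Rightarrow> nat \<Rightarrow> (nat \<Rightarrow> nat set) \<Rightarrow> ennreal" where
  "optD_WMP n m s = (INF \<sigma>\<in>{\<sigma>. valid_det n m s \<sigma>}. WMP n max_w (T_det s \<sigma>))"

definition optD_WEP :: "nat \<Rightarrow> nat \<Rightarrow> (nat \<Rightarrow> nat set) \<Rightarrow> ennreal" where
  "optD_WEP n m s = (INF \<sigma>\<in>{\<sigma>. valid_det n m s \<sigma>}. WEP n max_w (T_det s \<sigma>))"

text \<open>MWP is a limit; the infimum ranges over valid deterministic schedules for which
  this limit exists.\<close>
definition optD_MWP :: "nat \<Rightarrow> nat \<Rightarrow> (nat \<Rightarrow> nat set) \<Rightarrow> ennreal" where
  "optD_MWP n m s = (INF \<sigma>\<in>{\<sigma>. valid_det n m s \<sigma> \<and> convergent (MWP_avg n max_w (T_det s \<sigma>))}.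
      MWP n max_w (T_det s \<sigma>))"

definition opt_SUM :: "nat \<Rightarrow> nat \<Rightarrow> (nat \<Rightarrow> nat set) \<Rightarrow> ennreal" where
  "opt_SUM n m s = (INF M\<in>{M. valid_st n m s M}. EEP n (sum_w n) (T_st s M))"

definition opt_MAX :: "nat \<Rightarrow> nat \<Rightarrow> (nat \<Rightarrow> nat set) \<Rightarrow> ennreal" where
  "opt_MAX n m s = (INF M\<in>{M. valid_st n m s M}. WEP n max_w (T_st s M))"

definition optM_SUM :: "nat \<Rightarrow> nat \<Rightarrow> (nat \<Rightarrow> nat set) \<Rightarrow> ennreal" where
  "optM_SUM n m s = (INF q\<in>{q. test_dist m q}. EEP n (sum_w n) (T_st s (memoryless q)))"

definition optM_MAX :: "nat \<Rightarrow> nat \<Rightarrow> (nat \<Rightarrow> nat set) \<Rightarrow> ennreal" where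
  "optM_MAX n m s = (INF q\<in>{q. test_dist m q}. WEP n max_w (T_st s (memoryless q)))"

end

theory Submission
  imports Defs
begin

lemma least_suminf:
  fixes P :: "nat \<Rightarrow> bool"
  shows "(if \<exists>h. P h then of_nat (1 + (LEAST h. P h)) else \<infinity>) =
     (\<Sum>k. if \<forall>j<k. \<not> P j then 1 else 0 :: ennreal)"
proof (cases "\<exists>h. P h")
  case True
  define L where "L = (LEAST h. P h)"
  have PL: "P L" using True unfolding L_def by (rule LeastI_ex)
  have iff: "(\<forall>j<k. \<not> P j) \<longleftrightarrow> k \<le> L" for k
  proof
    assume a: "\<forall>j<k. \<not> P j" show "k \<le> L"
    proof (rule ccontr)
      assume "\<not> k \<le> L" then have "L < k" by simp
      then show False using a PL by blast
    qed
  next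
    assume "k \<le> L"
    show "\<forall>j<k. \<not> P j"
    proof (intro allI impI)
      fix j assume "j < k" then have "j < L" using \<open>k \<le> L\<close> by simp
      then show "\<not> P j" unfolding L_def by (rule not_less_Least)
    qed
  qed
  have "(\<Sum>k. if \<forall>j<k. \<not> P j then 1 else 0 :: ennreal) = (\<Sum>k\<in>{..L}. if \<forall>j<k. \<not> P j then 1 else 0)"
    by (rule suminf_finite) (auto simp: iff)
  also have "\<dots> = (\<Sum>k\<in>{..L}. 1)" by (rule sum.cong) (auto simp: iff)
  also have "\<dots> = of_nat (1 + L)" by simp
  finally show ?thesis using True L_def by simp
next
  case False
  have "\<not> summable (\<lambda>k::nat. 1::real)" by (simp add: summable_const_iff)
  then have "(\<Sum>k. ennreal 1) = top" using summable_iff_suminf_neq_top[of "\<lambda>_. 1::real"] by simp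
  then show ?thesis using False by simp
qed

lemma hit_suminf: "hit s e \<sigma> t = (\<Sum>k. indicator {\<sigma>. \<forall>j<k. e \<notin> s (\<sigma> (t+j))} \<sigma> :: ennreal)"
proof -
  have "hit s e \<sigma> t = (\<Sum>k. if \<forall>j<k. \<not> e \<in> s (\<sigma> (t+j)) then 1 else 0 :: ennreal)"
    unfolding hit_def using least_suminf[of "\<lambda>h. e \<in> s (\<sigma> (t + h))"] by (simp only: not_not)
  also have "\<dots> = (\<Sum>k. indicator {\<sigma>. \<forall>j<k. e \<notin> s (\<sigma> (t+j))} \<sigma> :: ennreal)"
    by (intro suminf_cong) (simp add: indicator_def)
  finally show ?thesis .
qed

lemma sets_cyl: "{\<sigma> \<in> space seq_space. \<forall>j<k. e \<notin> s (\<sigma> (t+j))} \<in> sets seq_space"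
proof -
  have "{\<sigma> \<in> space seq_space. \<forall>j<k. e \<notin> s (\<sigma> (t+j))} = {\<sigma> \<in> space seq_space. \<forall>j\<in>{..<k}. e \<notin> s (\<sigma> (t+j))}" by auto
  also have "\<dots> \<in> sets seq_space"
  proof (rule sets.sets_Collect_finite_All)
    fix j :: nat
    have m: "(\<lambda>\<sigma>. \<sigma> (t+j)) \<in> measurable seq_space (count_space UNIV)"
      unfolding seq_space_def by (rule measurable_component_singleton) simp
    have "{\<sigma> \<in> space seq_space. e \<notin> s (\<sigma> (t+j))} = (\<lambda>\<sigma>. \<sigma> (t+j)) -` {i. e \<notin> s i} \<inter> space seq_space" by auto
    then show "{\<sigma> \<in> space seq_space. e \<notin> s (\<sigma> (t+j))} \<in> sets seq_space"
      using measurable_sets[OF m, of "{i. e \<notin> s i}"] by simp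
  qed simp
  finally show ?thesis .
qed

lemma space_seq: "space seq_space = UNIV"
  by (simp add: seq_space_def space_PiM)

lemma meas_ind: "(\<lambda>\<sigma>. indicator {\<sigma>. \<forall>j<k. e \<notin> s (\<sigma> (t+j))} \<sigma> :: ennreal) \<in> borel_measurable seq_space"
proof -
  have "{\<sigma>. \<forall>j<k. e \<notin> s (\<sigma> (t+j))} = {\<sigma> \<in> space seq_space. \<forall>j<k. e \<notin> s (\<sigma> (t+j))}"
    by (simp add: space_seq)
  then show ?thesis using sets_cyl[of k e s t] by (simp only: borel_measurable_indicator)
qed

lemma hit_meas: "(\<lambda>\<sigma>. hit s e \<sigma> t) \<in> borel_measurable seq_space"
  unfolding hit_suminf by (rule borel_measurable_suminf_order) (rule meas_ind)

lemma card_le_Max_nat: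
  fixes S :: "nat set"
  assumes "finite S" "0 \<notin> S"
  shows "card S \<le> Max S"
proof (cases "S = {}")
  case True then show ?thesis by simp
next
  case False
  have "S \<subseteq> {1..Max S}" using assms False
    by (auto simp: Suc_le_eq intro: Max_ge)
  then have "card S \<le> card {1..Max S}" by (rule card_mono[rotated]) simp
  then show ?thesis by simp
qed

lemma sum_distinct_pos:
  fixes S :: "nat set"
  shows "finite S \<Longrightarrow> 0 \<notin> S \<Longrightarrow> card S * (card S + 1) \<le> 2 * \<Sum> S"
proof (induction "card S" arbitrary: S)
  case 0 then show ?case by simp
next
  case (Suc k)
  then have ne: "S \<noteq> {}" by auto
  define x where "x = Max S"
  have xS: "x \<in> S" using Suc ne x_def by simp
  have cx: "card S \<le> x" using card_le_Max_nat Suc x_def by simp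
  have c': "k = card (S - {x})" using Suc xS by simp
  have IH: "card (S - {x}) * (card (S - {x}) + 1) \<le> 2 * \<Sum> (S - {x})"
    using Suc.hyps(1)[OF c'] Suc.prems by simp
  have "\<Sum> S = x + \<Sum> (S - {x})" using Suc.prems xS by (simp add: sum.remove)
  moreover have "card S = card (S - {x}) + 1" using c' Suc.hyps(2) by simp
  moreover have "(c + 1) * (c + 1 + 1) = c * (c + 1) + 2 * (c + 1)" for c :: nat by (simp add: algebra_simps)
  ultimately show ?case
  proof -
    define c where "c = card (S - {x})"
    have "card S = c + 1" using \<open>card S = card (S - {x}) + 1\<close> c_def by simp
    then have "card S * (card S + 1) = c * (c + 1) + 2 * card S" by (simp add: algebra_simps)
    also have "\<dots> \<le> 2 * \<Sum> (S - {x}) + 2 * x" using IH cx c_def by simp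
    also have "\<dots> = 2 * \<Sum> S" using \<open>\<Sum> S = x + \<Sum> (S - {x})\<close> by simp
    finally show ?thesis .
  qed
qed

lemma image_full:
  fixes S :: "nat set"
  assumes "S \<subseteq> {1..k}" "card S = k"
  shows "S = {1..k}"
  using assms by (simp add: card_subset_eq)

definition sg :: "nat \<Rightarrow> nat set" where "sg i = {i}"

definition lh :: "(nat \<Rightarrow> nat) \<Rightarrow> nat \<Rightarrow> nat \<Rightarrow> nat" where
  "lh \<sigma> t e = (LEAST h. \<sigma> (t + h) = e)"

lemma hit_sg: "hit sg e \<sigma> t = (if \<exists>h. \<sigma> (t + h) = e then of_nat (1 + lh \<sigma> t e) else \<infinity>)"
  unfolding hit_def sg_def lh_def by (simp add: eq_commute)

lemma lh_prop: "\<exists>h. \<sigma> (t + h) = e \<Longrightarrow> \<sigma> (t + lh \<sigma> t e) = e"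
  unfolding lh_def by (rule LeastI_ex)

lemma lh_min: "\<sigma> (t + h) = e \<Longrightarrow> lh \<sigma> t e \<le> h"
  unfolding lh_def by (rule Least_le)

lemma lh_inj:
  assumes "\<forall>e\<in>A. \<exists>h. \<sigma> (t + h) = e"
  shows "inj_on (lh \<sigma> t) A"
proof
  fix x y assume "x \<in> A" "y \<in> A" "lh \<sigma> t x = lh \<sigma> t y"
  then show "x = y" using assms lh_prop by metis
qed

lemma key_bounds:
  assumes "n \<ge> 1"
  shows "of_nat n \<le> (SUP e\<in>{..<n}. hit sg e \<sigma> t)"
    and "of_nat (n * (n + 1)) \<le> 2 * (\<Sum>e<n. hit sg e \<sigma> t)"
proof -
  have "of_nat n \<le> (SUP e\<in>{..<n}. hit sg e \<sigma> t) \<and> of_nat (n * (n + 1)) \<le> 2 * (\<Sum>e<n. hit sg e \<sigma> t)"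
  proof (cases "\<forall>e\<in>{..<n}. \<exists>h. \<sigma> (t + h) = e")
    case False
    then obtain e where e: "e < n" "\<not> (\<exists>h. \<sigma> (t + h) = e)" by auto
    then have he: "hit sg e \<sigma> t = \<infinity>" by (simp add: hit_sg)
    have s1: "(\<Sum>e<n. hit sg e \<sigma> t) = \<infinity>" proof -
      have "hit sg e \<sigma> t \<le> (\<Sum>e<n. hit sg e \<sigma> t)" using e by (intro member_le_sum) auto
      then show ?thesis using he by (simp add: top_unique)
    qed
    have s2: "(SUP e\<in>{..<n}. hit sg e \<sigma> t) = \<infinity>"
    proof -
      have "hit sg e \<sigma> t \<le> (SUP e\<in>{..<n}. hit sg e \<sigma> t)" using e by (intro SUP_upper) auto
      then show ?thesis using he by (simp add: top_unique)
    qed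
    show ?thesis unfolding s1 s2 by (simp add: ennreal_mult_top)
  next
    case True
    define S where "S = (\<lambda>e. 1 + lh \<sigma> t e) ` {..<n}"
    have inj: "inj_on (\<lambda>e. 1 + lh \<sigma> t e) {..<n}"
      using lh_inj[OF True] by (simp add: inj_on_def)
    have cS: "card S = n" using inj S_def by (simp add: card_image)
    have fS: "finite S" "0 \<notin> S" using S_def by auto
    have hv: "\<And>e. e < n \<Longrightarrow> hit sg e \<sigma> t = of_nat (1 + lh \<sigma> t e)"
      using True by (simp add: hit_sg)
    have sumS: "\<Sum> S = (\<Sum>e<n. 1 + lh \<sigma> t e)" using inj S_def by (simp add: sum.reindex)
    have 1: "(\<Sum>e<n. hit sg e \<sigma> t) = of_nat (\<Sum>e<n. 1 + lh \<sigma> t e)"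
      using hv by simp
    have 2: "n * (n + 1) \<le> 2 * (\<Sum>e<n. 1 + lh \<sigma> t e)"
      using sum_distinct_pos[OF fS] cS sumS by simp
    have 3: "of_nat (n * (n + 1)) \<le> 2 * (\<Sum>e<n. hit sg e \<sigma> t)"
    proof -
      have "(of_nat (n * (n + 1)) :: ennreal) \<le> of_nat (2 * (\<Sum>e<n. 1 + lh \<sigma> t e))"
        using 2 by (simp only: of_nat_le_iff)
      then show ?thesis unfolding 1 by simp
    qed
    have ne: "S \<noteq> {}" using cS assms by auto
    have "n \<le> Max S" using card_le_Max_nat[OF fS] cS by simp
    then obtain e where e: "e < n" "n \<le> 1 + lh \<sigma> t e" using Max_in[OF fS(1) ne] S_def by auto
    have "of_nat n \<le> hit sg e \<sigma> t" unfolding hv[OF e(1)] using e(2) by (simp only: of_nat_le_iff)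
    also have "\<dots> \<le> (SUP e\<in>{..<n}. hit sg e \<sigma> t)" using e by (intro SUP_upper) auto
    finally show ?thesis using 3 by simp
  qed
  then show "of_nat n \<le> (SUP e\<in>{..<n}. hit sg e \<sigma> t)"
    and "of_nat (n * (n + 1)) \<le> 2 * (\<Sum>e<n. hit sg e \<sigma> t)" by auto
qed

lemma sets_mem: "sets (memoryless q) = sets seq_space"
  unfolding memoryless_def seq_space_def by (intro sets_PiM_cong) auto

lemma space_mem: "space (memoryless q) = UNIV"
  unfolding memoryless_def by (simp add: space_PiM)

lemma shift_all: "(\<forall>j<k. P (t + j)) \<longleftrightarrow> (\<forall>i\<in>{t..<t+k}. P (i::nat))"
proof
  assume "\<forall>j<k. P (t + j)"
  then show "\<forall>i\<in>{t..<t+k}. P i" by (metis atLeastLessThan_iff le_add_diff_inverse nat_add_left_cancel_less)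
qed auto

lemma cyl_prob:
  "emeasure (memoryless q) {\<sigma>. \<forall>j<k. e \<notin> sg (\<sigma> (t+j))} = ennreal ((1 - pmf q e) ^ k)"
proof -
  have eq: "{\<sigma>. \<forall>j<k. e \<notin> sg (\<sigma> (t+j))} =
      prod_emb UNIV (\<lambda>_. measure_pmf q) {t..<t+k} (Pi\<^sub>E {t..<t+k} (\<lambda>_. UNIV - {e}))"
  proof (rule set_eqI)
    fix \<sigma> :: "nat \<Rightarrow> nat"
    have 1: "\<sigma> \<in> {\<sigma>. \<forall>j<k. e \<notin> sg (\<sigma> (t+j))} \<longleftrightarrow> (\<forall>i\<in>{t..<t+k}. \<sigma> i \<noteq> e)"
    proof -
      have "\<sigma> \<in> {\<sigma>. \<forall>j<k. e \<notin> sg (\<sigma> (t+j))} \<longleftrightarrow> (\<forall>j<k. \<sigma> (t+j) \<noteq> e)" by (auto simp: sg_def)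
      then show ?thesis using shift_all[where P="\<lambda>i. \<sigma> i \<noteq> e" and k=k and t=t] by simp
    qed
    have 2: "\<sigma> \<in> prod_emb UNIV (\<lambda>_. measure_pmf q) {t..<t+k} (Pi\<^sub>E {t..<t+k} (\<lambda>_. UNIV - {e}))
       \<longleftrightarrow> (\<forall>i\<in>{t..<t+k}. \<sigma> i \<noteq> e)"
      by (auto simp: prod_emb_def space_PiM PiE_iff)
    show "\<sigma> \<in> {\<sigma>. \<forall>j<k. e \<notin> sg (\<sigma> (t+j))} \<longleftrightarrow> \<sigma> \<in> prod_emb UNIV (\<lambda>_. measure_pmf q) {t..<t+k} (Pi\<^sub>E {t..<t+k} (\<lambda>_. UNIV - {e}))"
      using 1 2 by simp
  qed
  have "emeasure (memoryless q) {\<sigma>. \<forall>j<k. e \<notin> sg (\<sigma> (t+j))} =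
     (\<Prod>i\<in>{t..<t+k}. emeasure (measure_pmf q) (UNIV - {e}))"
    unfolding eq memoryless_def
    by (rule emeasure_PiM_emb) (auto simp: measure_pmf.prob_space_axioms)
  also have "\<dots> = ennreal (1 - pmf q e) ^ k"
  proof -
    have "emeasure (measure_pmf q) (UNIV - {e}) = ennreal (1 - pmf q e)"
      using measure_pmf.prob_compl[of "{e}" q] 
      by (simp add: measure_pmf.emeasure_eq_measure measure_pmf_single)
    then show ?thesis by simp
  qed
  finally show ?thesis using pmf_le_1[of q e] by (simp add: ennreal_power)
qed

lemma hit_integral:
  assumes "sets M = sets seq_space"
  shows "T_st s M e t = (\<Sum>k. emeasure M {\<sigma>. \<forall>j<k. e \<notin> s (\<sigma> (t+j))})"
proof -
  have meas: "\<And>k. (\<lambda>\<sigma>. indicator {\<sigma>. \<forall>j<k. e \<notin> s (\<sigma> (t+j))} \<sigma> :: ennreal) \<in> borel_measurable M"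
    by (subst measurable_cong_sets[OF assms refl]) (rule meas_ind)
  have sp: "space M = UNIV" using sets_eq_imp_space_eq[OF assms] space_seq by simp
  have st: "\<And>k. {\<sigma>. \<forall>j<k. e \<notin> s (\<sigma> (t+j))} \<in> sets M"
    using sets_cyl[of _ e s t] assms by (simp add: space_seq)
  have "T_st s M e t = (\<integral>\<^sup>+ \<sigma>. (\<Sum>k. indicator {\<sigma>. \<forall>j<k. e \<notin> s (\<sigma> (t+j))} \<sigma>) \<partial>M)"
    unfolding T_st_def hit_suminf ..
  also have "\<dots> = (\<Sum>k. \<integral>\<^sup>+ \<sigma>. indicator {\<sigma>. \<forall>j<k. e \<notin> s (\<sigma> (t+j))} \<sigma> \<partial>M)"
    by (rule nn_integral_suminf[OF meas])
  also have "\<dots> = (\<Sum>k. emeasure M {\<sigma>. \<forall>j<k. e \<notin> s (\<sigma> (t+j))})"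
    using st by simp
  finally show ?thesis .
qed

lemma geo_ennreal:
  fixes p :: real
  assumes "0 < p" "p \<le> 1"
  shows "(\<Sum>k. ennreal ((1 - p) ^ k)) = ennreal (1 / p)"
proof -
  have "(\<lambda>k. (1 - p) ^ k) sums (1 / (1 - (1 - p)))" by (rule geometric_sums) (use assms in auto)
  then have "(\<lambda>k. (1 - p) ^ k) sums (1 / p)" by simp
  then show ?thesis by (rule suminf_ennreal_eq[rotated]) (use assms in simp)
qed

lemma geo_zero: "(\<Sum>k. ennreal ((1 - 0) ^ k)) = \<infinity>"
proof -
  have "\<not> summable (\<lambda>k::nat. 1::real)" by (simp add: summable_const_iff)
  then show ?thesis using summable_iff_suminf_neq_top[of "\<lambda>_. 1::real"] by simp
qed

lemma T_mem: "T_st sg (memoryless q) e t = (if pmf q e = 0 then \<infinity> else ennreal (1 / pmf q e))"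
proof -
  have T: "T_st sg (memoryless q) e t = (\<Sum>k. ennreal ((1 - pmf q e) ^ k))"
    unfolding hit_integral[OF sets_mem] cyl_prob ..
  show ?thesis
  proof (cases "pmf q e = 0")
    case True then show ?thesis unfolding T using geo_zero by simp
  next
    case False then have "0 < pmf q e" using pmf_nonneg[of q e] by linarith
    then have "(\<Sum>k. ennreal ((1 - pmf q e) ^ k)) = ennreal (1 / pmf q e)"
      using pmf_le_1[of q e] by (intro geo_ennreal)
    then show ?thesis unfolding T using False by (simp only: if_False)
  qed
qed

lemma cesaro_const: "H > 0 \<Longrightarrow> cesaro (\<lambda>_. c) H = c"
proof -
  assume "H > 0"
  have "(\<Sum>t<H. c) = c * of_nat H" by (simp add: mult.commute)
  moreover have "(of_nat H :: ennreal) \<noteq> 0" "(of_nat H :: ennreal) \<noteq> top" using \<open>H > 0\<close> by auto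
  ultimately show ?thesis unfolding cesaro_def by (simp add: mult_divide_eq_ennreal)
qed

lemma tendsto_cesaro_const: "cesaro (\<lambda>_. c) \<longlonglongrightarrow> c"
proof -
  have "(\<lambda>H. cesaro (\<lambda>_. c) (Suc H)) = (\<lambda>_. c)" using cesaro_const by auto
  then have "(\<lambda>H. cesaro (\<lambda>_. c) (Suc H)) \<longlonglongrightarrow> c" by simp
  then show ?thesis by (simp add: filterlim_sequentially_Suc)
qed

lemma Et_const: "(\<And>t. T e t = c) \<Longrightarrow> Et T e = c \<and> convergent (cesaro (\<lambda>t. T e t))"
proof -
  assume "\<And>t. T e t = c"
  then have "(\<lambda>t. T e t) = (\<lambda>_. c)" by auto
  then show ?thesis unfolding Et_def using tendsto_cesaro_const[of c]
    by (auto simp: convergent_def intro: limI)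
qed

definition Vq :: "nat pmf \<Rightarrow> nat \<Rightarrow> ennreal" where
  "Vq q e = (if pmf q e = 0 then \<infinity> else ennreal (1 / pmf q e))"

lemma Et_mem: "Et (T_st sg (memoryless q)) e = Vq q e"
  using Et_const[of "T_st sg (memoryless q)" e "Vq q e"] T_mem unfolding Vq_def by auto

lemma ne_lt: "n \<ge> 1 \<Longrightarrow> {..<n} \<noteq> ({} :: nat set)"
proof -
  assume "n \<ge> 1" then have "0 \<in> {..<n}" by simp
  then show ?thesis by blast
qed

lemma sum_pmf_le: "(\<Sum>e<n. pmf q e) \<le> (1::real)" for q :: "nat pmf"
proof -
  have "(\<Sum>e<n. pmf q e) = measure (measure_pmf q) {..<n}" by (rule measure_measure_pmf_finite[symmetric]) simp
  then show ?thesis using measure_pmf.prob_le_1[of q "{..<n}"] by simp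
qed

lemma Vq_ge: "pmf q e \<le> 1 / real n \<Longrightarrow> n \<ge> 1 \<Longrightarrow> of_nat n \<le> Vq q e"
proof (cases "pmf q e = 0")
  case True then show ?thesis by (simp add: Vq_def)
next
  case False
  assume a: "pmf q e \<le> 1 / real n" "n \<ge> 1"
  have p: "0 < pmf q e" using False pmf_nonneg[of q e] by linarith
  then have "real n \<le> 1 / pmf q e" using a by (simp add: field_simps)
  then have "ennreal (real n) \<le> ennreal (1 / pmf q e)" by (rule ennreal_leI)
  then show ?thesis using False by (simp add: Vq_def ennreal_of_nat_eq_real_of_nat)
qed

lemma optM_MAX_lower:
  assumes "n \<ge> 1"
  shows "of_nat n \<le> WEP n max_w (T_st sg (memoryless q))"
proof -
  obtain e where e: "e < n" "pmf q e \<le> 1 / real n"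
  proof (rule ccontr)
    assume "\<not> thesis"
    then have "\<forall>e<n. 1 / real n < pmf q e" using that by force
    moreover have "0 \<in> {..<n}" using assms by simp
    then have "{..<n} \<noteq> {}" by blast
    ultimately have "(\<Sum>e<n. 1 / real n) < (\<Sum>e<n. pmf q e)" by (intro sum_strict_mono) auto
    then show False using sum_pmf_le[of q n] assms by simp
  qed
  have "of_nat n \<le> max_w e * Et (T_st sg (memoryless q)) e"
    using Vq_ge[OF e(2) assms] by (simp add: max_w_def Et_mem)
  also have "\<dots> \<le> WEP n max_w (T_st sg (memoryless q))"
    unfolding WEP_def using e by (intro SUP_upper) auto
  finally show ?thesis .
qed

lemma recip_tangent:
  fixes p :: real assumes "p > 0" "n > 0"
  shows "2 * n - n^2 * p \<le> 1 / p"
proof -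
  have "0 \<le> (n * p - 1)^2" by simp
  then have "2 * n * p - n^2 * p * p \<le> 1" by (simp add: power2_eq_square algebra_simps)
  then show ?thesis using assms by (simp add: field_simps power2_eq_square)
qed

lemma optM_SUM_lower:
  assumes "n \<ge> 1"
  shows "of_nat n \<le> EEP n (sum_w n) (T_st sg (memoryless q))"
proof (cases "\<exists>e<n. pmf q e = 0")
  case True
  then obtain e where e: "e < n" "pmf q e = 0" by auto
  have "sum_w n e * Et (T_st sg (memoryless q)) e = \<infinity>"
    using e assms by (simp add: Et_mem Vq_def sum_w_def ennreal_mult_top)
  moreover have "sum_w n e * Et (T_st sg (memoryless q)) e \<le> EEP n (sum_w n) (T_st sg (memoryless q))"
    unfolding EEP_def using e by (intro member_le_sum) auto
  ultimately show ?thesis by (simp add: top_unique)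
next
  case False
  then have pos: "\<And>e. e < n \<Longrightarrow> 0 < pmf q e" using pmf_nonneg
    by (metis less_eq_real_def)
  have eq: "EEP n (sum_w n) (T_st sg (memoryless q)) = ennreal (\<Sum>e<n. (1 / real n) * (1 / pmf q e))"
  proof -
    have "EEP n (sum_w n) (T_st sg (memoryless q)) = (\<Sum>e<n. ennreal ((1 / real n) * (1 / pmf q e)))"
      unfolding EEP_def
    proof (rule sum.cong)
      fix e assume "e \<in> {..<n}"
      then have "pmf q e \<noteq> 0" using False by auto
      then show "sum_w n e * Et (T_st sg (memoryless q)) e = ennreal ((1 / real n) * (1 / pmf q e))"
        by (simp add: Et_mem Vq_def sum_w_def ennreal_mult[symmetric])
    qed simp
    also have "\<dots> = ennreal (\<Sum>e<n. (1 / real n) * (1 / pmf q e))"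
      by (rule sum_ennreal) (use pos in \<open>auto intro: less_imp_le\<close>)
    finally show ?thesis .
  qed
  have "(\<Sum>e<n. (2 * real n - real n^2 * pmf q e)) \<le> (\<Sum>e<n. 1 / pmf q e)"
    using pos assms by (intro sum_mono recip_tangent) auto
  moreover have "(\<Sum>e<n. (2 * real n - real n^2 * pmf q e)) = 2 * real n * n - real n^2 * (\<Sum>e<n. pmf q e)"
    by (simp add: sum_subtractf sum_distrib_left)
  moreover have "real n^2 * (\<Sum>e<n. pmf q e) \<le> real n^2" using sum_pmf_le[of q n]
    by (simp add: mult_left_le)
  ultimately have "real n ^ 2 \<le> (\<Sum>e<n. 1 / pmf q e)" by (simp add: power2_eq_square)
  then have "real n \<le> (1 / real n) * (\<Sum>e<n. 1 / pmf q e)" using assms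
    by (simp add: field_simps power2_eq_square)
  then have "real n \<le> (\<Sum>e<n. (1 / real n) * (1 / pmf q e))" by (simp add: sum_distrib_left)
  then show ?thesis unfolding eq by (simp add: ennreal_of_nat_eq_real_of_nat ennreal_leI)
qed

definition unif :: "nat \<Rightarrow> nat pmf" where "unif n = pmf_of_set {..<n}"

lemma unif_pmf: "n \<ge> 1 \<Longrightarrow> e < n \<Longrightarrow> pmf (unif n) e = 1 / real n"
  unfolding unif_def by (subst pmf_of_set) (auto simp: ne_lt)

lemma unif_dist: "n \<ge> 1 \<Longrightarrow> test_dist n (unif n)"
  unfolding unif_def test_dist_def by (subst set_pmf_of_set) (auto simp: ne_lt)

lemma Vq_unif: "n \<ge> 1 \<Longrightarrow> e < n \<Longrightarrow> Vq (unif n) e = of_nat n"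
  by (simp add: Vq_def unif_pmf ennreal_of_nat_eq_real_of_nat)

lemma WEP_unif: "n \<ge> 1 \<Longrightarrow> WEP n max_w (T_st sg (memoryless (unif n))) = of_nat n"
proof -
  assume n: "n \<ge> 1"
  then have "0 \<in> {..<n}" by simp
  then have ne: "{..<n} \<noteq> {}" by blast
  have "WEP n max_w (T_st sg (memoryless (unif n))) = (SUP e\<in>{..<n}. of_nat n)"
    unfolding WEP_def using n by (intro SUP_cong) (auto simp: Et_mem Vq_unif max_w_def)
  then show ?thesis using ne by simp
qed

lemma EEP_unif: "n \<ge> 1 \<Longrightarrow> EEP n (sum_w n) (T_st sg (memoryless (unif n))) = of_nat n"
proof -
  assume n: "n \<ge> 1"
  have "EEP n (sum_w n) (T_st sg (memoryless (unif n))) = (\<Sum>e<n. ennreal (1 / real n) * of_nat n)"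
    unfolding EEP_def by (rule sum.cong) (auto simp: Et_mem Vq_unif n sum_w_def)
  also have "\<dots> = of_nat n * (ennreal (1 / real n) * of_nat n)" by simp
  also have "\<dots> = ennreal (real n * (1 / real n * real n))"
    by (simp only: ennreal_of_nat_eq_real_of_nat ennreal_mult[symmetric] of_nat_0_le_iff divide_nonneg_nonneg zero_le_one mult_nonneg_nonneg)
  also have "\<dots> = of_nat n" using n by (simp add: ennreal_of_nat_eq_real_of_nat)
  finally show ?thesis .
qed

lemma optM_MAX_val: "n \<ge> 1 \<Longrightarrow> optM_MAX n n sg = of_nat n"
  unfolding optM_MAX_def
proof (rule antisym)
  assume n: "n \<ge> 1"
  show "(INF q\<in>{q. test_dist n q}. WEP n max_w (T_st sg (memoryless q))) \<le> of_nat n"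
    by (rule INF_lower2[of "unif n"]) (use n in \<open>auto simp: unif_dist WEP_unif\<close>)
  show "of_nat n \<le> (INF q\<in>{q. test_dist n q}. WEP n max_w (T_st sg (memoryless q)))"
    by (rule INF_greatest) (use n optM_MAX_lower in auto)
qed

lemma optM_SUM_val: "n \<ge> 1 \<Longrightarrow> optM_SUM n n sg = of_nat n"
  unfolding optM_SUM_def
proof (rule antisym)
  assume n: "n \<ge> 1"
  show "(INF q\<in>{q. test_dist n q}. EEP n (sum_w n) (T_st sg (memoryless q))) \<le> of_nat n"
    by (rule INF_lower2[of "unif n"]) (use n in \<open>auto simp: unif_dist EEP_unif\<close>)
  show "of_nat n \<le> (INF q\<in>{q. test_dist n q}. EEP n (sum_w n) (T_st sg (memoryless q)))"
    by (rule INF_greatest) (use n optM_SUM_lower in auto)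
qed

lemma periodic_mod:
  fixes g :: "nat \<Rightarrow> 'a"
  assumes p: "p > 0" and per: "\<And>t. g (t + p) = g t"
  shows "g t = g (t mod p)"
proof (induction t rule: less_induct)
  case (less t)
  show ?case
  proof (cases "t < p")
    case True then show ?thesis by simp
  next
    case False
    then have t: "t = (t - p) + p" by simp
    have "g t = g (t - p)" using per[of "t - p"] t by simp
    also have "\<dots> = g ((t - p) mod p)" using less p False by simp
    also have "(t - p) mod p = t mod p" using False by (simp add: mod_if)
    finally show ?thesis .
  qed
qed

lemma periodic_sum:
  fixes g :: "nat \<Rightarrow> real"
  assumes p: "p > 0" and per: "\<And>t. g (t + p) = g t"
  shows "(\<Sum>t<N. g t) = real (N div p) * (\<Sum>t<p. g t) + (\<Sum>t<N mod p. g t)"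
proof (induction N)
  case 0 then show ?case by simp
next
  case (Suc N)
  have gN: "g N = g (N mod p)" using periodic_mod[where g=g, OF p per] .
  show ?case
  proof (cases "Suc (N mod p) = p")
    case True
    then have d: "Suc N div p = Suc (N div p)" "Suc N mod p = 0"
      using p by (simp_all add: div_Suc mod_Suc)
    have "(\<Sum>t<p. g t) = (\<Sum>t<N mod p. g t) + g (N mod p)"
      using True by (metis sum.lessThan_Suc)
    then show ?thesis using Suc gN d by (simp add: algebra_simps)
  next
    case False
    then have d: "Suc N div p = N div p" "Suc N mod p = Suc (N mod p)"
      using p by (simp_all add: div_Suc mod_Suc)
    then show ?thesis using Suc gN by simp
  qed
qed

lemma periodic_cesaro_real:
  fixes g :: "nat \<Rightarrow> real"
  assumes p: "p > 0" and per: "\<And>t. g (t + p) = g t" and nn: "\<And>t. 0 \<le> g t"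
  shows "(\<lambda>H. (\<Sum>t<Suc H. g t) / real (Suc H)) \<longlonglongrightarrow> (\<Sum>t<p. g t) / real p"
proof -
  define S where "S = (\<Sum>t<p. g t)"
  have bound: "\<bar>(\<Sum>t<Suc H. g t) / real (Suc H) - S / real p\<bar> \<le> 2 * S / real (Suc H)" for H
  proof -
    define N where "N = Suc H"
    define R where "R = (\<Sum>t<N mod p. g t)"
    have R0: "0 \<le> R" unfolding R_def using nn by (simp add: sum_nonneg)
    have RS: "R \<le> S" unfolding R_def S_def using p nn
      by (intro sum_mono2) auto
    have sum: "(\<Sum>t<N. g t) = real (N div p) * S + R" unfolding R_def S_def by (rule periodic_sum[where g=g, OF p per])
    have Nr: "real N = real (N div p) * real p + real (N mod p)"
      by (metis div_mult_mod_eq of_nat_add of_nat_mult)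
    have mp: "real (N mod p) \<le> real p" using p by simp
    have S0: "0 \<le> S" unfolding S_def using nn by (simp add: sum_nonneg)
    have Npos: "real N > 0" unfolding N_def by simp
    have "(\<Sum>t<N. g t) - real N * S / real p = R - real (N mod p) * S / real p"
      using sum Nr p by (simp add: field_simps)
    moreover have "0 \<le> real (N mod p) * S / real p" using S0 by simp
    moreover have "real (N mod p) * S / real p \<le> S"
    proof -
      have "real (N mod p) * S \<le> real p * S" using mp S0 by (rule mult_right_mono)
      then show ?thesis using p by (simp add: divide_le_eq mult.commute)
    qed
    ultimately have "\<bar>(\<Sum>t<N. g t) - real N * S / real p\<bar> \<le> 2 * S" using R0 RS
    proof -
      assume e: "(\<Sum>t<N. g t) - real N * S / real p = R - real (N mod p) * S / real p"
        and a: "0 \<le> real (N mod p) * S / real p" "real (N mod p) * S / real p \<le> S"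
      define X where "X = real (N mod p) * S / real p"
      have "\<bar>R - X\<bar> \<le> 2 * S" using a R0 RS unfolding X_def[symmetric] by (simp add: abs_le_iff)
      then show ?thesis using e X_def by simp
    qed
    then have "\<bar>((\<Sum>t<N. g t) - real N * S / real p) / real N\<bar> \<le> 2 * S / real N"
      using Npos by (simp add: divide_right_mono abs_divide)
    moreover have "((\<Sum>t<N. g t) - real N * S / real p) / real N = (\<Sum>t<N. g t) / real N - S / real p"
      using Npos by (simp add: field_simps)
    ultimately have "\<bar>(\<Sum>t<N. g t) / real N - S / real p\<bar> \<le> 2 * S / real N" by simp
    then show ?thesis unfolding N_def .
  qed
  have "(\<lambda>H. 2 * S / real (Suc H)) \<longlonglongrightarrow> 0"
    using LIMSEQ_Suc[OF lim_const_over_n[of "2 * S"]] by simp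
  then have "(\<lambda>H. (\<Sum>t<Suc H. g t) / real (Suc H) - S / real p) \<longlonglongrightarrow> 0"
    by (rule Lim_null_comparison[rotated]) (use bound in \<open>simp add: eventually_sequentially\<close>)
  then show ?thesis unfolding S_def by (simp add: LIM_zero_iff)
qed

lemma periodic_cesaro:
  fixes g :: "nat \<Rightarrow> real"
  assumes p: "p > 0" and per: "\<And>t. g (t + p) = g t" and nn: "\<And>t. 0 \<le> g t"
  shows "cesaro (\<lambda>t. ennreal (g t)) \<longlonglongrightarrow> ennreal ((\<Sum>t<p. g t) / real p)"
proof -
  have eq: "cesaro (\<lambda>t. ennreal (g t)) (Suc H) = ennreal ((\<Sum>t<Suc H. g t) / real (Suc H))" for H
  proof -
    have "cesaro (\<lambda>t. ennreal (g t)) (Suc H) = ennreal (\<Sum>t<Suc H. g t) / ennreal (real (Suc H))"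
    proof -
      have "(\<Sum>t<Suc H. ennreal (g t)) = ennreal (\<Sum>t<Suc H. g t)" by (rule sum_ennreal) (use nn in auto)
      then show ?thesis unfolding cesaro_def by (simp only: ennreal_of_nat_eq_real_of_nat)
    qed
    also have "\<dots> = ennreal ((\<Sum>t<Suc H. g t) / real (Suc H))"
      using nn by (intro divide_ennreal) (auto simp: sum_nonneg)
    finally show ?thesis .
  qed
  have "(\<lambda>H. ennreal ((\<Sum>t<Suc H. g t) / real (Suc H))) \<longlonglongrightarrow> ennreal ((\<Sum>t<p. g t) / real p)"
    by (intro tendsto_ennrealI periodic_cesaro_real[where g=g, OF p per nn])
  then have "(\<lambda>H. cesaro (\<lambda>t. ennreal (g t)) (Suc H)) \<longlonglongrightarrow> ennreal ((\<Sum>t<p. g t) / real p)"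
    unfolding eq .
  then show ?thesis by (simp add: filterlim_sequentially_Suc)
qed

lemma mod_shift_inj:
  fixes t t' L n :: nat
  assumes "(t + L) mod n = (t' + L) mod n" "t < n" "t' < n"
  shows "t = t'"
proof -
  have *: "a = b" if "(a + L) mod n = (b + L) mod n" "a < n" "b < n" "b \<le> a" for a b :: nat
  proof (rule ccontr)
    assume "a \<noteq> b"
    then have "0 < a - b" "a - b < n" using that by auto
    moreover have "n dvd (a + L) - (b + L)" using that(1) mod_eq_dvd_iff_nat[of "b + L" "a + L" n] that(4) by simp
    ultimately show False using nat_dvd_not_less by simp
  qed
  show ?thesis
  proof (cases "t' \<le> t")
    case True then show ?thesis using * assms by blast
  next
    case False then show ?thesis using *[of t' t] assms by simp
  qed
qed

lemma rr_witness:
  fixes n e t :: nat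
  assumes "n \<ge> 1" "e < n"
  shows "(t + (e + n - t mod n) mod n) mod n = e"
proof -
  have "(t + (e + n - t mod n) mod n) mod n = (t mod n + (e + n - t mod n)) mod n"
    by (simp add: mod_add_left_eq mod_add_right_eq)
  also have "t mod n + (e + n - t mod n) = e + n"
  proof -
    have "t mod n < n" using assms by simp
    then show ?thesis by simp
  qed
  also have "(e + n) mod n = e" using assms by simp
  finally show ?thesis .
qed

definition rr :: "nat \<Rightarrow> nat \<Rightarrow> nat" where "rr n t = t mod n"

lemma rr_ex: "n \<ge> 1 \<Longrightarrow> e < n \<Longrightarrow> \<exists>h<n. rr n (t + h) = e"
  unfolding rr_def using rr_witness by (intro exI[of _ "(e + n - t mod n) mod n"]) auto

lemma lh_rr_lt: "n \<ge> 1 \<Longrightarrow> e < n \<Longrightarrow> lh (rr n) t e < n"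
proof -
  assume "n \<ge> 1" "e < n"
  then obtain h where "h < n" "rr n (t + h) = e" using rr_ex by blast
  then show ?thesis using lh_min[of "rr n" t h e] by simp
qed

lemma hit_rr: "n \<ge> 1 \<Longrightarrow> e < n \<Longrightarrow> hit sg e (rr n) t = of_nat (1 + lh (rr n) t e)"
  using rr_ex unfolding hit_sg by auto

lemma lh_rr_per: "lh (rr n) (t + n) e = lh (rr n) t e"
proof -
  have "\<And>h. (t + n + h) mod n = (t + h) mod n"
    by (metis add.commute add.left_commute mod_add_self2)
  then show ?thesis unfolding lh_def rr_def by presburger
qed

lemma lh_rr_prop: "n \<ge> 1 \<Longrightarrow> e < n \<Longrightarrow> (t + lh (rr n) t e) mod n = e"
  using lh_prop[of "rr n" t e] rr_ex unfolding rr_def by blast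

lemma gauss2: "2 * (\<Sum>i\<in>{1..n}. i) = n * (n + 1)" for n :: nat
  by (induction n) (simp_all add: algebra_simps)

lemma perm_sum:
  fixes F :: "nat \<Rightarrow> nat"
  assumes inj: "inj_on F {..<n}" and rng: "\<And>x. x < n \<Longrightarrow> 1 \<le> F x \<and> F x \<le> n"
  shows "2 * (\<Sum>x<n. F x) = n * (n + 1)" and "n \<ge> 1 \<Longrightarrow> \<exists>x<n. F x = n"
proof -
  have img: "F ` {..<n} = {1..n}"
    using rng inj by (intro image_full) (auto simp: card_image)
  have "(\<Sum>x<n. F x) = (\<Sum>i\<in>{1..n}. i)"
    using inj img by (metis sum.reindex_cong)
  then show "2 * (\<Sum>x<n. F x) = n * (n + 1)" using gauss2 by simp
  show "n \<ge> 1 \<Longrightarrow> \<exists>x<n. F x = n"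
  proof -
    assume "n \<ge> 1" then have "n \<in> F ` {..<n}" using img by simp
    then show ?thesis by auto
  qed
qed

lemma rr_sum_e:
  assumes n: "n \<ge> 1"
  shows "of_nat (n * (n + 1)) = 2 * (\<Sum>e<n. hit sg e (rr n) t)"
    and "(SUP e\<in>{..<n}. hit sg e (rr n) t) = of_nat n"
proof -
  define F where "F = (\<lambda>e. 1 + lh (rr n) t e)"
  have inj: "inj_on F {..<n}" unfolding F_def using lh_inj[of "{..<n}" "rr n" t] rr_ex[OF n]
    by (auto simp: inj_on_def)
  have rng: "\<And>x. x < n \<Longrightarrow> 1 \<le> F x \<and> F x \<le> n" unfolding F_def using lh_rr_lt[OF n] by (simp add: Suc_le_eq)
  have hv: "\<And>e. e < n \<Longrightarrow> hit sg e (rr n) t = of_nat (F e)" unfolding F_def using hit_rr[OF n] by simp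
  have "(\<Sum>e<n. hit sg e (rr n) t) = of_nat (\<Sum>e<n. F e)" using hv by simp
  then show "of_nat (n * (n + 1)) = 2 * (\<Sum>e<n. hit sg e (rr n) t)"
    using perm_sum(1)[OF inj rng] by (metis of_nat_mult of_nat_numeral)
  obtain x where x: "x < n" "F x = n" using perm_sum(2)[OF inj rng n] by blast
  show "(SUP e\<in>{..<n}. hit sg e (rr n) t) = of_nat n"
  proof (rule antisym)
    show "(SUP e\<in>{..<n}. hit sg e (rr n) t) \<le> of_nat n"
      using hv rng by (intro SUP_least) (auto simp: of_nat_le_iff)
    show "of_nat n \<le> (SUP e\<in>{..<n}. hit sg e (rr n) t)"
      using x hv[OF x(1)] by (intro SUP_upper2[of x]) auto
  qed
qed

lemma rr_sum_t:
  assumes n: "n \<ge> 1" and e: "e < n"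
  shows "2 * (\<Sum>t<n. 1 + lh (rr n) t e) = n * (n + 1)"
    and "(SUP t. hit sg e (rr n) t) = of_nat n"
proof -
  define F where "F = (\<lambda>t. 1 + lh (rr n) t e)"
  have inj: "inj_on F {..<n}"
  proof
    fix t t' assume "t \<in> {..<n}" "t' \<in> {..<n}" "F t = F t'"
    then show "t = t'" using lh_rr_prop[OF n e, of t] lh_rr_prop[OF n e, of t'] unfolding F_def
      by (intro mod_shift_inj[of t "lh (rr n) t e" n t']) auto
  qed
  have rng: "\<And>x. 1 \<le> F x \<and> F x \<le> n" unfolding F_def using lh_rr_lt[OF n e] by (simp add: Suc_le_eq)
  have hv: "\<And>t. hit sg e (rr n) t = of_nat (F t)" unfolding F_def using hit_rr[OF n e] by simp
  show "2 * (\<Sum>t<n. 1 + lh (rr n) t e) = n * (n + 1)"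
    using perm_sum(1)[OF inj rng] unfolding F_def .
  obtain x where x: "x < n" "F x = n" using perm_sum(2)[OF inj rng n] by blast
  show "(SUP t. hit sg e (rr n) t) = of_nat n"
  proof (rule antisym)
    show "(SUP t. hit sg e (rr n) t) \<le> of_nat n"
      using hv rng by (intro SUP_least) (auto simp: of_nat_le_iff)
    show "of_nat n \<le> (SUP t. hit sg e (rr n) t)"
      using x hv[of x] by (intro SUP_upper2[of x]) auto
  qed
qed

definition Bv :: "nat \<Rightarrow> ennreal" where "Bv n = ennreal ((real n + 1) / 2)"

lemma avg_const: "n \<ge> 1 \<Longrightarrow> x \<ge> 0 \<Longrightarrow> (\<Sum>e<n. ennreal (1 / real n) * ennreal x) = ennreal x"
proof -
  assume n: "n \<ge> 1" and x: "x \<ge> 0"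
  have "(\<Sum>e<n. ennreal (1 / real n) * ennreal x) = of_nat n * (ennreal (1 / real n) * ennreal x)" by simp
  also have "\<dots> = ennreal (real n * (1 / real n * x))"
    using x by (simp only: ennreal_of_nat_eq_real_of_nat ennreal_mult[symmetric] of_nat_0_le_iff divide_nonneg_nonneg zero_le_one mult_nonneg_nonneg)
  also have "real n * (1 / real n * x) = x" using n by simp
  finally show ?thesis .
qed

lemma Et_rr:
  assumes n: "n \<ge> 1" and e: "e < n"
  shows "Et (T_det sg (rr n)) e = Bv n" "convergent (cesaro (\<lambda>t. T_det sg (rr n) e t))"
proof -
  define g where "g t = real (1 + lh (rr n) t e)" for t
  have eqf: "(\<lambda>t. T_det sg (rr n) e t) = (\<lambda>t. ennreal (g t))"
    unfolding T_det_def g_def using hit_rr[OF n e] by (auto simp: ennreal_of_nat_eq_real_of_nat)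
  have per: "\<And>t. g (t + n) = g t" unfolding g_def using lh_rr_per by metis
  have "(\<Sum>t<n. g t) = real (\<Sum>t<n. 1 + lh (rr n) t e)" unfolding g_def by simp
  also have "\<dots> = real n * (real n + 1) / 2" using rr_sum_t(1)[OF n e]
    by (metis (mono_tags, lifting) nonzero_mult_div_cancel_left of_nat_1 of_nat_add of_nat_mult
        of_nat_numeral zero_neq_numeral)
  finally have S: "(\<Sum>t<n. g t) / real n = (real n + 1) / 2" using n by simp
  have lim: "cesaro (\<lambda>t. T_det sg (rr n) e t) \<longlonglongrightarrow> Bv n"
    unfolding eqf Bv_def S[symmetric]
  proof (rule periodic_cesaro)
    show "0 < n" using n by simp
    show "\<And>t. g (t + n) = g t" by (rule per)
    show "\<And>t. 0 \<le> g t" unfolding g_def by simp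
  qed
  then show "Et (T_det sg (rr n)) e = Bv n" unfolding Et_def by (rule limI)
  show "convergent (cesaro (\<lambda>t. T_det sg (rr n) e t))" using lim by (auto simp: convergent_def)
qed

lemma freq_rr: "n \<ge> 1 \<Longrightarrow> convergent (cesaro (\<lambda>t. freq_det (rr n) i t))"
proof -
  assume n: "n \<ge> 1"
  define g where "g t = (if t mod n = i then 1 else 0 :: real)" for t
  have eqf: "(\<lambda>t. freq_det (rr n) i t) = (\<lambda>t. ennreal (g t))"
    unfolding freq_det_def g_def rr_def by auto
  have "cesaro (\<lambda>t. freq_det (rr n) i t) \<longlonglongrightarrow> ennreal ((\<Sum>t<n. g t) / real n)"
    unfolding eqf using n by (intro periodic_cesaro) (auto simp: g_def)
  then show ?thesis by (auto simp: convergent_def)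
qed

lemma Mt_rr: "n \<ge> 1 \<Longrightarrow> e < n \<Longrightarrow> Mt (T_det sg (rr n)) e = of_nat n"
  unfolding Mt_def T_det_def using rr_sum_t(2) by simp

lemma valid_rr: "n \<ge> 1 \<Longrightarrow> valid_det n n sg (rr n)"
  unfolding valid_det_def valid_def det_sched_def
  using Mt_rr Et_rr(2) freq_rr by (auto simp: rr_def of_nat_less_top)

lemma MWP_avg_rr: "n \<ge> 1 \<Longrightarrow> MWP_avg n max_w (T_det sg (rr n)) = cesaro (\<lambda>_. of_nat n)"
  unfolding MWP_avg_def T_det_def max_w_def using rr_sum_e(2) by simp

lemma MWP_rr: "n \<ge> 1 \<Longrightarrow> convergent (MWP_avg n max_w (T_det sg (rr n))) \<and> MWP n max_w (T_det sg (rr n)) = of_nat n"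
  unfolding MWP_def using MWP_avg_rr tendsto_cesaro_const
  by (auto simp: convergent_def intro: limI)

lemma WMP_rr: "n \<ge> 1 \<Longrightarrow> WMP n max_w (T_det sg (rr n)) = of_nat n"
proof -
  assume n: "n \<ge> 1"
  have "WMP n max_w (T_det sg (rr n)) = (SUP e\<in>{..<n}. of_nat n)"
    unfolding WMP_def using Mt_rr[OF n] unfolding Mt_def by (intro SUP_cong) (auto simp: max_w_def)
  then show ?thesis using ne_lt[OF n] by simp
qed

lemma EMP_rr: "n \<ge> 1 \<Longrightarrow> EMP n (sum_w n) (T_det sg (rr n)) = of_nat n"
proof -
  assume n: "n \<ge> 1"
  have "EMP n (sum_w n) (T_det sg (rr n)) = (\<Sum>e<n. ennreal (1 / real n) * ennreal (real n))"
    unfolding EMP_def using Mt_rr[OF n] by (intro sum.cong) (auto simp: sum_w_def ennreal_of_nat_eq_real_of_nat)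
  also have "\<dots> = ennreal (real n)" using n by (intro avg_const) auto
  finally show ?thesis by (simp add: ennreal_of_nat_eq_real_of_nat)
qed

lemma WEP_rr: "n \<ge> 1 \<Longrightarrow> WEP n max_w (T_det sg (rr n)) = Bv n"
proof -
  assume n: "n \<ge> 1"
  have "WEP n max_w (T_det sg (rr n)) = (SUP e\<in>{..<n}. Bv n)"
    unfolding WEP_def using Et_rr(1)[OF n] by (intro SUP_cong) (auto simp: max_w_def)
  then show ?thesis using ne_lt[OF n] by simp
qed

lemma EEP_rr: "n \<ge> 1 \<Longrightarrow> EEP n (sum_w n) (T_det sg (rr n)) = Bv n"
proof -
  assume n: "n \<ge> 1"
  have "EEP n (sum_w n) (T_det sg (rr n)) = (\<Sum>e<n. ennreal (1 / real n) * ennreal ((real n + 1) / 2))"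
    unfolding EEP_def using Et_rr(1)[OF n] by (intro sum.cong) (auto simp: sum_w_def Bv_def)
  also have "\<dots> = Bv n" unfolding Bv_def using n by (intro avg_const) auto
  finally show ?thesis .
qed

lemma sum_hit_rr: "n \<ge> 1 \<Longrightarrow> (\<Sum>e<n. hit sg e (rr n) t) = ennreal (real n * (real n + 1) / 2)"
proof -
  assume n: "n \<ge> 1"
  define X where "X = (\<Sum>e<n. hit sg e (rr n) t)"
  have "of_nat (n * (n + 1)) = 2 * X" unfolding X_def by (rule rr_sum_e(1)[OF n])
  moreover have "(of_nat (n * (n + 1)) :: ennreal) = ennreal (real n * (real n + 1))"
  proof -
    have "(of_nat (n * (n + 1)) :: ennreal) = ennreal (real (n * (n + 1)))" by (rule ennreal_of_nat_eq_real_of_nat)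
    moreover have "real (n * (n + 1)) = real n * (real n + 1)" by (simp add: algebra_simps)
    ultimately show ?thesis by (simp only:)
  qed
  ultimately have "X * 2 = ennreal (real n * (real n + 1))" by (simp add: mult.commute)
  then have "X = ennreal (real n * (real n + 1)) / 2"
    using mult_divide_eq_ennreal[of 2 X] by simp
  also have "\<dots> = ennreal (real n * (real n + 1) / 2)"
    by (subst ennreal_divide_numeral) auto
  finally show ?thesis unfolding X_def .
qed

lemma MEP_rr: "n \<ge> 1 \<Longrightarrow> MEP n (sum_w n) (T_det sg (rr n)) = Bv n"
proof -
  assume n: "n \<ge> 1"
  have "\<And>t. (\<Sum>e<n. sum_w n e * T_det sg (rr n) e t) = Bv n"
  proof -
    fix t
    have "(\<Sum>e<n. sum_w n e * T_det sg (rr n) e t) = ennreal (1 / real n) * (\<Sum>e<n. hit sg e (rr n) t)"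
      by (simp add: sum_w_def T_det_def sum_distrib_left)
    also have "\<dots> = ennreal (1 / real n * (real n * (real n + 1) / 2))"
      by (simp add: sum_hit_rr[OF n] ennreal_mult[symmetric])
    also have "1 / real n * (real n * (real n + 1) / 2) = (real n + 1) / 2" using n by simp
    finally show "(\<Sum>e<n. sum_w n e * T_det sg (rr n) e t) = Bv n" unfolding Bv_def .
  qed
  then show ?thesis unfolding MEP_def by simp
qed

lemma L1:
  assumes n: "n \<ge> 1" and b: "of_nat (n * (n + 1)) \<le> 2 * X"
  shows "Bv n \<le> ennreal (1 / real n) * X"
proof (cases "X = \<top>")
  case True
  have "ennreal (1 / real n) \<noteq> 0" using n by simp
  then show ?thesis using True by (simp add: ennreal_mult_top)
next
  case False
  then obtain x where x: "X = ennreal x" "0 \<le> x" by (cases X) auto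
  have "(of_nat (n * (n + 1)) :: ennreal) = ennreal (real n * (real n + 1))"
  proof -
    have "(of_nat (n * (n + 1)) :: ennreal) = ennreal (real (n * (n + 1)))" by (rule ennreal_of_nat_eq_real_of_nat)
    moreover have "real (n * (n + 1)) = real n * (real n + 1)" by (simp add: algebra_simps)
    ultimately show ?thesis by (simp only:)
  qed
  moreover have "2 * X = ennreal (2 * x)" using x by (simp add: ennreal_mult)
  ultimately have "real n * (real n + 1) \<le> 2 * x" using b x by (simp add: ennreal_le_iff)
  then have "(real n + 1) / 2 \<le> 1 / real n * x" using n by (simp add: field_simps)
  then have "ennreal ((real n + 1) / 2) \<le> ennreal (1 / real n * x)" by (rule ennreal_leI)
  moreover have "ennreal (1 / real n * x) = ennreal (1 / real n) * ennreal x"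
    using x by (intro ennreal_mult) auto
  ultimately show ?thesis unfolding Bv_def x by simp
qed

lemma L2:
  assumes "\<And>t. b \<le> g t" "H > 0"
  shows "b \<le> cesaro g H"
proof -
  have "of_nat H * b \<le> (\<Sum>t<H. g t)"
    using sum_mono[of "{..<H}" "\<lambda>_. b" g] assms by simp
  then have "(of_nat H * b) / of_nat H \<le> (\<Sum>t<H. g t) / of_nat H" by (rule divide_right_mono_ennreal)
  moreover have "(of_nat H * b) / of_nat H = b"
    using assms(2) by (simp add: mult.commute[of "of_nat H"] mult_divide_eq_ennreal)
  ultimately show ?thesis unfolding cesaro_def by simp
qed

lemma lim_ge:
  assumes "convergent f" "\<And>H. H > 0 \<Longrightarrow> b \<le> f H"
  shows "b \<le> lim (f :: nat \<Rightarrow> ennreal)"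
proof -
  have "f \<longlonglongrightarrow> lim f" using assms(1) by (simp add: convergent_LIMSEQ_iff)
  then show ?thesis by (rule LIMSEQ_le_const) (use assms(2) in \<open>auto intro!: exI[of _ 1]\<close>)
qed

lemma L3:
  assumes n: "n \<ge> 1"
  shows "(\<Sum>e<n. ennreal (1 / real n) * x e) \<le> (SUP e\<in>{..<n}. x e)"
proof -
  define M where "M = (SUP e\<in>{..<n}. x e)"
  have "(\<Sum>e<n. ennreal (1 / real n) * x e) \<le> (\<Sum>e<n. ennreal (1 / real n) * M)"
    unfolding M_def by (intro sum_mono mult_left_mono SUP_upper) auto
  also have "\<dots> = (of_nat n * ennreal (1 / real n)) * M" by (simp add: mult.assoc)
  also have "of_nat n * ennreal (1 / real n) = 1"
  proof -
    have "of_nat n * ennreal (1 / real n) = ennreal (real n * (1 / real n))"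
      by (simp only: ennreal_of_nat_eq_real_of_nat ennreal_mult[symmetric] of_nat_0_le_iff divide_nonneg_nonneg zero_le_one)
    then show ?thesis using n by simp
  qed
  finally show ?thesis unfolding M_def by simp
qed

lemma cesaro_lin:
  "(\<Sum>e<n. c * cesaro (\<lambda>t. T e t) H) = cesaro (\<lambda>t. \<Sum>e<n. c * T e t) H"
proof -
  have "(\<Sum>e<n. c * cesaro (\<lambda>t. T e t) H) = (\<Sum>e<n. c * (\<Sum>t<H. T e t) * inverse (of_nat H))"
    unfolding cesaro_def divide_ennreal_def by (simp add: mult.assoc)
  also have "\<dots> = (\<Sum>e<n. c * (\<Sum>t<H. T e t)) * inverse (of_nat H)"
    by (simp add: sum_distrib_right)
  also have "(\<Sum>e<n. c * (\<Sum>t<H. T e t)) = (\<Sum>e<n. \<Sum>t<H. c * T e t)"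
    by (simp add: sum_distrib_left)
  also have "\<dots> = (\<Sum>t<H. \<Sum>e<n. c * T e t)" by (rule sum.swap)
  finally show ?thesis unfolding cesaro_def divide_ennreal_def .
qed

lemma B_lower:
  assumes n: "n \<ge> 1"
    and bnd: "\<And>t. of_nat (n * (n + 1)) \<le> 2 * (\<Sum>e<n. T e t)"
    and conv: "\<And>e. e < n \<Longrightarrow> convergent (cesaro (\<lambda>t. T e t))"
  shows "Bv n \<le> EEP n (sum_w n) T" "Bv n \<le> WEP n max_w T"
proof -
  define c where "c = ennreal (1 / real n)"
  have pt: "\<And>t. Bv n \<le> (\<Sum>e<n. c * T e t)"
    unfolding c_def sum_distrib_left[symmetric] by (rule L1[OF n bnd])
  have lim: "(\<lambda>H. \<Sum>e<n. c * cesaro (\<lambda>t. T e t) H) \<longlonglongrightarrow> (\<Sum>e<n. c * Et T e)"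
    unfolding Et_def
    by (intro tendsto_sum ennreal_tendsto_cmult) (use conv in \<open>auto simp: convergent_LIMSEQ_iff c_def\<close>)
  have "Bv n \<le> (\<Sum>e<n. c * Et T e)"
  proof (rule LIMSEQ_le_const[OF lim])
    show "\<exists>N. \<forall>H\<ge>N. Bv n \<le> (\<Sum>e<n. c * cesaro (\<lambda>t. T e t) H)"
      by (rule exI[of _ 1]) (auto simp: cesaro_lin intro!: L2 pt)
  qed
  then show E: "Bv n \<le> EEP n (sum_w n) T" unfolding EEP_def c_def sum_w_def .
  also have "EEP n (sum_w n) T \<le> (SUP e\<in>{..<n}. Et T e)"
    unfolding EEP_def sum_w_def by (rule L3[OF n])
  finally show "Bv n \<le> WEP n max_w T" unfolding WEP_def max_w_def by simp
qed

lemma MEP_lower: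
  assumes n: "n \<ge> 1"
    and bnd: "\<And>t. of_nat (n * (n + 1)) \<le> 2 * (\<Sum>e<n. T e t)"
  shows "Bv n \<le> MEP n (sum_w n) T"
proof -
  have "Bv n \<le> (\<Sum>e<n. sum_w n e * T e 0)"
    unfolding sum_w_def sum_distrib_left[symmetric] by (rule L1[OF n bnd])
  also have "\<dots> \<le> MEP n (sum_w n) T" unfolding MEP_def by (rule SUP_upper) simp
  finally show ?thesis .
qed

lemma MWP_lower:
  assumes n: "n \<ge> 1" and bnd: "\<And>t. of_nat n \<le> (SUP e\<in>{..<n}. T e t)"
    and conv: "convergent (MWP_avg n max_w T)"
  shows "of_nat n \<le> MWP n max_w T"
  unfolding MWP_def
proof (rule lim_ge[OF conv])
  fix H :: nat assume "H > 0"
  then show "of_nat n \<le> MWP_avg n max_w T H"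
    unfolding MWP_avg_def max_w_def using bnd by (intro L2) auto
qed

lemma WMP_lower:
  assumes n: "n \<ge> 1" and bnd: "of_nat n \<le> (SUP e\<in>{..<n}. T e 0)"
  shows "of_nat n \<le> WMP n max_w T"
proof -
  have "(SUP e\<in>{..<n}. T e 0) \<le> WMP n max_w T"
    unfolding WMP_def max_w_def by (intro SUP_mono) (auto intro: SUP_upper)
  then show ?thesis using bnd by simp
qed

lemma count_lower:
  assumes W: "\<And>t. \<exists>h<g. \<sigma> (t + h) = (e::nat)"
  shows "k \<le> card {j\<in>{..<k * g}. \<sigma> j = e}"
proof (induction k)
  case 0 then show ?case by simp
next
  case (Suc k)
  obtain h where h: "h < g" "\<sigma> (k * g + h) = e" using W by blast
  have sub: "insert (k * g + h) {j\<in>{..<k * g}. \<sigma> j = e} \<subseteq> {j\<in>{..<Suc k * g}. \<sigma> j = e}"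
    using h by auto
  have nin: "k * g + h \<notin> {j\<in>{..<k * g}. \<sigma> j = e}" by simp
  have "Suc k \<le> card (insert (k * g + h) {j\<in>{..<k * g}. \<sigma> j = e})" using Suc nin by simp
  also have "\<dots> \<le> card {j\<in>{..<Suc k * g}. \<sigma> j = e}" by (rule card_mono[OF _ sub]) simp
  finally show ?case .
qed

lemma count_total: "(\<Sum>e<n. card {j\<in>{..<L}. \<sigma> j = e}) \<le> (L::nat)" for \<sigma> :: "nat \<Rightarrow> nat"
proof -
  have c: "card {j\<in>{..<L}. \<sigma> j = e} = (\<Sum>j<L. if \<sigma> j = e then 1 else 0)" for e :: nat
  proof -
    have "card {j\<in>{..<L}. \<sigma> j = e} = (\<Sum>j\<in>{j\<in>{..<L}. \<sigma> j = e}. 1)" by simp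
    also have "\<dots> = (\<Sum>j<L. if \<sigma> j = e then 1 else 0)" by (rule sum.inter_filter) simp
    finally show ?thesis .
  qed
  have "(\<Sum>e<n. card {j\<in>{..<L}. \<sigma> j = e}) = (\<Sum>e<n. \<Sum>j<L. if \<sigma> j = e then 1 else 0)"
    by (simp only: c)
  also have "\<dots> = (\<Sum>j<L. \<Sum>e<n. if \<sigma> j = e then 1 else 0)" by (rule sum.swap)
  also have "\<dots> \<le> (\<Sum>j<L. (1::nat))"
  proof (rule sum_mono)
    fix j
    have "(\<Sum>e<n. if \<sigma> j = e then 1 else 0) = (if \<sigma> j \<in> {..<n} then 1 else (0::nat))"
      by (simp add: sum.delta)
    then show "(\<Sum>e<n. if \<sigma> j = e then 1 else 0) \<le> (1::nat)" by simp
  qed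
  finally show ?thesis by simp
qed

lemma recip_sum_le:
  fixes g :: "nat \<Rightarrow> nat"
  assumes W: "\<And>e t. e < n \<Longrightarrow> \<exists>h<g e. \<sigma> (t + h) = e" and g1: "\<And>e. e < n \<Longrightarrow> g e \<ge> 1"
  shows "(\<Sum>e<n. 1 / real (g e)) \<le> 1"
proof -
  define P where "P = (\<Prod>e<n. g e)"
  have Ppos: "P > 0" unfolding P_def using g1 by (intro prod_pos) (auto simp: Suc_le_eq)
  have dv: "\<And>e. e < n \<Longrightarrow> g e dvd P" unfolding P_def by (intro dvd_prodI) auto
  have k: "\<And>e. e < n \<Longrightarrow> P div g e * g e = P" using dv by simp
  have "(\<Sum>e<n. P div g e) \<le> (\<Sum>e<n. card {j\<in>{..<P}. \<sigma> j = e})"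
  proof (rule sum_mono)
    fix e assume "e \<in> {..<n}"
    then have "P div g e \<le> card {j\<in>{..<P div g e * g e}. \<sigma> j = e}"
      using W by (intro count_lower) auto
    then show "P div g e \<le> card {j\<in>{..<P}. \<sigma> j = e}" using k \<open>e \<in> {..<n}\<close> by simp
  qed
  also have "\<dots> \<le> P" by (rule count_total)
  finally have "real (\<Sum>e<n. P div g e) \<le> real P" by linarith
  moreover have "real (\<Sum>e<n. P div g e) = (\<Sum>e<n. real P * (1 / real (g e)))"
    using dv g1 by (simp add: real_of_nat_div)
  ultimately have "real P * (\<Sum>e<n. 1 / real (g e)) \<le> real P * 1" by (simp add: sum_distrib_left)
  then show ?thesis using Ppos by simp
qed

lemma sum_g_lower:
  fixes g :: "nat \<Rightarrow> nat"
  assumes n: "n \<ge> 1" and r: "(\<Sum>e<n. 1 / real (g e)) \<le> 1" and g1: "\<And>e. e < n \<Longrightarrow> g e \<ge> 1"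
  shows "real n * real n \<le> (\<Sum>e<n. real (g e))"
proof -
  have "(\<Sum>e<n. 2 * real n - (real n)^2 * (1 / real (g e))) \<le> (\<Sum>e<n. 1 / (1 / real (g e)))"
    using g1 n by (intro sum_mono recip_tangent) (auto simp: Suc_le_eq)
  also have "\<dots> = (\<Sum>e<n. real (g e))" by simp
  finally have a: "(\<Sum>e<n. 2 * real n - (real n)^2 * (1 / real (g e))) \<le> (\<Sum>e<n. real (g e))" .
  have "(\<Sum>e<n. 2 * real n - (real n)^2 * (1 / real (g e))) = 2 * real n * real n - (real n)^2 * (\<Sum>e<n. 1 / real (g e))"
    by (simp add: sum_subtractf sum_distrib_left)
  moreover have "(real n)^2 * (\<Sum>e<n. 1 / real (g e)) \<le> (real n)^2" using r by (simp add: mult_left_le)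
  ultimately show ?thesis using a by (simp add: power2_eq_square)
qed

lemma EMP_lower:
  assumes n: "n \<ge> 1" and v: "valid_det n m sg \<sigma>"
  shows "of_nat n \<le> EMP n (sum_w n) (T_det sg \<sigma>)"
proof -
  have fin: "\<And>e. e < n \<Longrightarrow> Mt (T_det sg \<sigma>) e < \<top>" using v unfolding valid_det_def valid_def by auto
  define r where "r e = enn2real (Mt (T_det sg \<sigma>) e)" for e
  define g where "g e = nat \<lfloor>r e\<rfloor>" for e
  have Mr: "\<And>e. e < n \<Longrightarrow> Mt (T_det sg \<sigma>) e = ennreal (r e)" unfolding r_def using fin
    by (simp add: less_top)
  have r0: "\<And>e. 0 \<le> r e" unfolding r_def by simp
  have W: "\<exists>h<g e. \<sigma> (t + h) = e" if e: "e < n" for e t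
  proof -
    have le: "hit sg e \<sigma> t \<le> Mt (T_det sg \<sigma>) e" unfolding Mt_def T_det_def by (rule SUP_upper) simp
    then have ex: "\<exists>h. \<sigma> (t + h) = e" using fin[OF e] by (auto simp: hit_sg split: if_splits)
    then have "of_nat (1 + lh \<sigma> t e) \<le> ennreal (r e)" using le Mr[OF e] by (simp add: hit_sg)
    then have "ennreal (real (1 + lh \<sigma> t e)) \<le> ennreal (r e)" by (simp only: ennreal_of_nat_eq_real_of_nat)
    then have "real (1 + lh \<sigma> t e) \<le> r e" using r0 by (simp only: ennreal_le_iff)
    then have "1 + lh \<sigma> t e \<le> g e" unfolding g_def by (simp add: le_nat_floor)
    then show ?thesis using lh_prop[OF ex] by (intro exI[of _ "lh \<sigma> t e"]) auto
  qed
  have g1: "g e \<ge> 1" if e: "e < n" for e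
  proof -
    obtain h where "h < g e" using W[OF e, of 0] by blast
    then show ?thesis by simp
  qed
  have gr: "\<And>e. e < n \<Longrightarrow> real (g e) \<le> r e" unfolding g_def using r0 by simp
  have "real n * real n \<le> (\<Sum>e<n. real (g e))"
    using sum_g_lower[OF n recip_sum_le[of n g \<sigma>, OF W g1] g1] by simp
  then have "1 / real n * (real n * real n) \<le> 1 / real n * (\<Sum>e<n. real (g e))"
    by (rule mult_left_mono) simp
  moreover have "1 / real n * (real n * real n) = real n" using n by simp
  ultimately have "real n \<le> (\<Sum>e<n. 1 / real n * real (g e))"
    by (simp only: sum_distrib_left)
  then have "ennreal (real n) \<le> ennreal (\<Sum>e<n. 1 / real n * real (g e))" by (rule ennreal_leI)
  also have "\<dots> = (\<Sum>e<n. ennreal (1 / real n) * ennreal (real (g e)))"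
  proof -
    have "(\<Sum>e<n. ennreal (1 / real n) * ennreal (real (g e))) = (\<Sum>e<n. ennreal (1 / real n * real (g e)))"
      by (intro sum.cong refl) (simp only: ennreal_mult[symmetric] divide_nonneg_nonneg of_nat_0_le_iff zero_le_one)
    also have "\<dots> = ennreal (\<Sum>e<n. 1 / real n * real (g e))" by (rule sum_ennreal) simp
    finally show ?thesis by simp
  qed
  also have "\<dots> \<le> (\<Sum>e<n. ennreal (1 / real n) * Mt (T_det sg \<sigma>) e)"
    using gr Mr by (intro sum_mono mult_left_mono) (auto intro: ennreal_leI)
  finally have "ennreal (real n) \<le> (\<Sum>e<n. ennreal (1 / real n) * Mt (T_det sg \<sigma>) e)" .
  then show ?thesis unfolding EMP_def sum_w_def ennreal_of_nat_eq_real_of_nat .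
qed

lemma comp_meas: "(\<lambda>\<sigma>. \<sigma> t) \<in> measurable seq_space (count_space UNIV)"
  unfolding seq_space_def by (rule measurable_component_singleton) simp

lemma set_t: "{\<sigma>\<in>space seq_space. P (\<sigma> t)} \<in> sets seq_space"
proof -
  have "{\<sigma>\<in>space seq_space. P (\<sigma> t)} = (\<lambda>\<sigma>. \<sigma> t) -` {i. P i} \<inter> space seq_space" by auto
  then show ?thesis using measurable_sets[OF comp_meas, of "{i. P i}" t] by simp
qed

lemma pred_all: "Measurable.pred seq_space (\<lambda>\<sigma>. \<forall>t::nat. \<sigma> t < n)"
  unfolding pred_def
  by (rule sets.sets_Collect_countable_All) (rule set_t)

definition Dr :: "nat \<Rightarrow> (nat \<Rightarrow> nat) measure" where "Dr n = return seq_space (rr n)"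

lemma T_Dr: "T_st sg (Dr n) = T_det sg (rr n)"
  unfolding T_st_def T_det_def Dr_def
  by (intro ext nn_integral_return) (auto simp: space_seq hit_meas)

lemma freq_Dr: "freq_st (Dr n) = freq_det (rr n)"
proof (intro ext)
  fix i t
  have sp: "space (Dr n) = space seq_space" unfolding Dr_def by simp
  have "freq_st (Dr n) i t = emeasure (return seq_space (rr n)) {\<sigma>\<in>space seq_space. \<sigma> t = i}"
    unfolding freq_st_def sp unfolding Dr_def ..
  also have "\<dots> = indicator {\<sigma>\<in>space seq_space. \<sigma> t = i} (rr n)"
    by (rule emeasure_return) (rule set_t)
  also have "\<dots> = freq_det (rr n) i t" unfolding freq_det_def by (simp add: space_seq)
  finally show "freq_st (Dr n) i t = freq_det (rr n) i t" .
qed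

lemma stoch_Dr: "n \<ge> 1 \<Longrightarrow> stoch_sched n (Dr n)"
  unfolding stoch_sched_def Dr_def
proof (intro conjI)
  show "prob_space (return seq_space (rr n))" by (rule prob_space_return) (simp add: space_seq)
  show "sets (return seq_space (rr n)) = sets seq_space" by simp
  assume "n \<ge> 1"
  then show "AE \<sigma> in return seq_space (rr n). \<forall>t. \<sigma> t < n"
    by (subst AE_return) (auto simp: space_seq pred_all rr_def)
qed

lemma valid_Dr: "n \<ge> 1 \<Longrightarrow> valid_st n n sg (Dr n)"
  unfolding valid_st_def T_Dr freq_Dr using stoch_Dr valid_rr unfolding valid_det_def by auto

lemma stoch_bnd:
  assumes n: "n \<ge> 1" and st: "stoch_sched m M"
  shows "of_nat (n * (n + 1)) \<le> 2 * (\<Sum>e<n. T_st sg M e t)"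
proof -
  have ps: "prob_space M" and sM: "sets M = sets seq_space" using st unfolding stoch_sched_def by auto
  have meas: "\<And>e. (\<lambda>\<sigma>. hit sg e \<sigma> t) \<in> borel_measurable M"
    by (subst measurable_cong_sets[OF sM refl]) (rule hit_meas)
  have measS: "(\<lambda>\<sigma>. \<Sum>e<n. hit sg e \<sigma> t) \<in> borel_measurable M"
    by (rule borel_measurable_sum) (rule meas)
  have "of_nat (n * (n + 1)) = (\<integral>\<^sup>+ \<sigma>. of_nat (n * (n + 1)) \<partial>M)"
    using prob_space.emeasure_space_1[OF ps] by simp
  also have "\<dots> \<le> (\<integral>\<^sup>+ \<sigma>. 2 * (\<Sum>e<n. hit sg e \<sigma> t) \<partial>M)"
    by (intro nn_integral_mono key_bounds(2)[OF n])
  also have "\<dots> = 2 * (\<integral>\<^sup>+ \<sigma>. (\<Sum>e<n. hit sg e \<sigma> t) \<partial>M)" by (rule nn_integral_cmult[OF measS])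
  also have "(\<integral>\<^sup>+ \<sigma>. (\<Sum>e<n. hit sg e \<sigma> t) \<partial>M) = (\<Sum>e<n. T_st sg M e t)"
    unfolding T_st_def by (rule nn_integral_sum) (rule meas)
  finally show ?thesis .
qed

lemma stoch_conv: "valid_st n m s M \<Longrightarrow> e < n \<Longrightarrow> convergent (cesaro (\<lambda>t. T_st s M e t))"
  unfolding valid_st_def valid_def by auto

lemma det_conv: "valid_det n m s \<sigma> \<Longrightarrow> e < n \<Longrightarrow> convergent (cesaro (\<lambda>t. T_det s \<sigma> e t))"
  unfolding valid_det_def valid_def by auto

lemma det_bnd: "n \<ge> 1 \<Longrightarrow> of_nat (n * (n + 1)) \<le> 2 * (\<Sum>e<n. T_det sg \<sigma> e t)"
  unfolding T_det_def by (rule key_bounds(2))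

lemma det_bnd_sup: "n \<ge> 1 \<Longrightarrow> of_nat n \<le> (SUP e\<in>{..<n}. T_det sg \<sigma> e t)"
  unfolding T_det_def by (rule key_bounds(1))

lemma opt_MAX_val: "n \<ge> 1 \<Longrightarrow> opt_MAX n n sg = Bv n"
  unfolding opt_MAX_def
proof (rule antisym)
  assume n: "n \<ge> 1"
  show "(INF M\<in>{M. valid_st n n sg M}. WEP n max_w (T_st sg M)) \<le> Bv n"
    by (rule INF_lower2[of "Dr n"]) (use n in \<open>auto simp: valid_Dr T_Dr WEP_rr\<close>)
  show "Bv n \<le> (INF M\<in>{M. valid_st n n sg M}. WEP n max_w (T_st sg M))"
  proof (rule INF_greatest)
    fix M assume "M \<in> {M. valid_st n n sg M}"
    then have v: "valid_st n n sg M" by simp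
    then have st: "stoch_sched n M" unfolding valid_st_def by simp
    show "Bv n \<le> WEP n max_w (T_st sg M)"
      by (rule B_lower(2)[OF n stoch_bnd[OF n st] stoch_conv[OF v]])
  qed
qed

lemma opt_SUM_val: "n \<ge> 1 \<Longrightarrow> opt_SUM n n sg = Bv n"
  unfolding opt_SUM_def
proof (rule antisym)
  assume n: "n \<ge> 1"
  show "(INF M\<in>{M. valid_st n n sg M}. EEP n (sum_w n) (T_st sg M)) \<le> Bv n"
    by (rule INF_lower2[of "Dr n"]) (use n in \<open>auto simp: valid_Dr T_Dr EEP_rr\<close>)
  show "Bv n \<le> (INF M\<in>{M. valid_st n n sg M}. EEP n (sum_w n) (T_st sg M))"
  proof (rule INF_greatest)
    fix M assume "M \<in> {M. valid_st n n sg M}"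
    then have v: "valid_st n n sg M" by simp
    then have st: "stoch_sched n M" unfolding valid_st_def by simp
    show "Bv n \<le> EEP n (sum_w n) (T_st sg M)"
      by (rule B_lower(1)[OF n stoch_bnd[OF n st] stoch_conv[OF v]])
  qed
qed

lemma optD_WEP_val: "n \<ge> 1 \<Longrightarrow> optD_WEP n n sg = Bv n"
  unfolding optD_WEP_def
proof (rule antisym)
  assume n: "n \<ge> 1"
  show "(INF \<sigma>\<in>{\<sigma>. valid_det n n sg \<sigma>}. WEP n max_w (T_det sg \<sigma>)) \<le> Bv n"
    by (rule INF_lower2[of "rr n"]) (use n in \<open>auto simp: valid_rr WEP_rr\<close>)
  show "Bv n \<le> (INF \<sigma>\<in>{\<sigma>. valid_det n n sg \<sigma>}. WEP n max_w (T_det sg \<sigma>))"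
    by (rule INF_greatest) (auto intro: B_lower(2)[OF n det_bnd[OF n] det_conv])
qed

lemma optD_EEP_val: "n \<ge> 1 \<Longrightarrow> optD_EEP n n sg = Bv n"
  unfolding optD_EEP_def
proof (rule antisym)
  assume n: "n \<ge> 1"
  show "(INF \<sigma>\<in>{\<sigma>. valid_det n n sg \<sigma>}. EEP n (sum_w n) (T_det sg \<sigma>)) \<le> Bv n"
    by (rule INF_lower2[of "rr n"]) (use n in \<open>auto simp: valid_rr EEP_rr\<close>)
  show "Bv n \<le> (INF \<sigma>\<in>{\<sigma>. valid_det n n sg \<sigma>}. EEP n (sum_w n) (T_det sg \<sigma>))"
    by (rule INF_greatest) (auto intro: B_lower(1)[OF n det_bnd[OF n] det_conv])
qed

lemma optD_MEP_val: "n \<ge> 1 \<Longrightarrow> optD_MEP n n sg = Bv n"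
  unfolding optD_MEP_def
proof (rule antisym)
  assume n: "n \<ge> 1"
  show "(INF \<sigma>\<in>{\<sigma>. valid_det n n sg \<sigma>}. MEP n (sum_w n) (T_det sg \<sigma>)) \<le> Bv n"
    by (rule INF_lower2[of "rr n"]) (use n in \<open>auto simp: valid_rr MEP_rr\<close>)
  show "Bv n \<le> (INF \<sigma>\<in>{\<sigma>. valid_det n n sg \<sigma>}. MEP n (sum_w n) (T_det sg \<sigma>))"
    by (rule INF_greatest) (auto intro: MEP_lower[OF n det_bnd[OF n]])
qed

lemma optD_WMP_val: "n \<ge> 1 \<Longrightarrow> optD_WMP n n sg = of_nat n"
  unfolding optD_WMP_def
proof (rule antisym)
  assume n: "n \<ge> 1"
  show "(INF \<sigma>\<in>{\<sigma>. valid_det n n sg \<sigma>}. WMP n max_w (T_det sg \<sigma>)) \<le> of_nat n"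
    by (rule INF_lower2[of "rr n"]) (use n in \<open>auto simp: valid_rr WMP_rr\<close>)
  show "of_nat n \<le> (INF \<sigma>\<in>{\<sigma>. valid_det n n sg \<sigma>}. WMP n max_w (T_det sg \<sigma>))"
    by (rule INF_greatest) (auto intro: WMP_lower[OF n det_bnd_sup[OF n]])
qed

lemma optD_EMP_val: "n \<ge> 1 \<Longrightarrow> optD_EMP n n sg = of_nat n"
  unfolding optD_EMP_def
proof (rule antisym)
  assume n: "n \<ge> 1"
  show "(INF \<sigma>\<in>{\<sigma>. valid_det n n sg \<sigma>}. EMP n (sum_w n) (T_det sg \<sigma>)) \<le> of_nat n"
    by (rule INF_lower2[of "rr n"]) (use n in \<open>auto simp: valid_rr EMP_rr\<close>)
  show "of_nat n \<le> (INF \<sigma>\<in>{\<sigma>. valid_det n n sg \<sigma>}. EMP n (sum_w n) (T_det sg \<sigma>))"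
    by (rule INF_greatest) (auto intro: EMP_lower[OF n])
qed

lemma optD_MWP_val: "n \<ge> 1 \<Longrightarrow> optD_MWP n n sg = of_nat n"
  unfolding optD_MWP_def
proof (rule antisym)
  assume n: "n \<ge> 1"
  show "(INF \<sigma>\<in>{\<sigma>. valid_det n n sg \<sigma> \<and> convergent (MWP_avg n max_w (T_det sg \<sigma>))}. MWP n max_w (T_det sg \<sigma>)) \<le> of_nat n"
    by (rule INF_lower2[of "rr n"]) (use n MWP_rr[OF n] in \<open>auto simp: valid_rr\<close>)
  show "of_nat n \<le> (INF \<sigma>\<in>{\<sigma>. valid_det n n sg \<sigma> \<and> convergent (MWP_avg n max_w (T_det sg \<sigma>))}. MWP n max_w (T_det sg \<sigma>))"
    by (rule INF_greatest) (auto intro: MWP_lower[OF n det_bnd_sup[OF n]])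
qed

lemma inst: "n \<ge> 1 \<Longrightarrow> is_instance n n sg"
  unfolding is_instance_def sg_def by auto

theorem lemma7:
  fixes \<epsilon> :: real
  assumes "\<epsilon> > 0"
  shows "\<exists>n m s A B. is_instance n m s
     \<and> optM_MAX n m s = A \<and> optM_SUM n m s = A \<and> optD_WMP n m s = A
     \<and> optD_EMP n m s = A \<and> optD_MWP n m s = A
     \<and> optD_WEP n m s = B \<and> optD_EEP n m s = B \<and> optD_MEP n m s = B
     \<and> opt_MAX n m s = B \<and> opt_SUM n m s = B
     \<and> A \<ge> ennreal (2 - \<epsilon>) * B"
proof -
  define n where "n = nat \<lceil>2 / \<epsilon>\<rceil> + 1"
  have n: "n \<ge> 1" unfolding n_def by simp
  have "2 / \<epsilon> \<le> real (nat \<lceil>2 / \<epsilon>\<rceil>)" by linarith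
  then have "2 / \<epsilon> \<le> real n" unfolding n_def by simp
  then have en: "2 \<le> \<epsilon> * real n" using assms by (simp add: field_simps)
  have ineq: "ennreal (2 - \<epsilon>) * Bv n \<le> of_nat n"
  proof (cases "2 - \<epsilon> \<ge> 0")
    case True
    have "(2 - \<epsilon>) * ((real n + 1) / 2) \<le> real n" using en assms by (simp add: field_simps)
    then have "ennreal ((2 - \<epsilon>) * ((real n + 1) / 2)) \<le> ennreal (real n)" by (rule ennreal_leI)
    moreover have "ennreal ((2 - \<epsilon>) * ((real n + 1) / 2)) = ennreal (2 - \<epsilon>) * ennreal ((real n + 1) / 2)"
      using True by (intro ennreal_mult) auto
    ultimately show ?thesis unfolding Bv_def ennreal_of_nat_eq_real_of_nat by metis
  next
    case False
    then have "ennreal (2 - \<epsilon>) = 0" by (simp add: ennreal_eq_0_iff)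
    then show ?thesis by simp
  qed
  show ?thesis
    apply (rule exI[of _ n], rule exI[of _ n], rule exI[of _ sg], rule exI[of _ "of_nat n"], rule exI[of _ "Bv n"])
    using inst[OF n] optM_MAX_val[OF n] optM_SUM_val[OF n] optD_WMP_val[OF n] optD_EMP_val[OF n]
      optD_MWP_val[OF n] optD_WEP_val[OF n] optD_EEP_val[OF n] optD_MEP_val[OF n]
      opt_MAX_val[OF n] opt_SUM_val[OF n] ineq by simp
qed

end
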